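(* Let $k$ be a field, $R=k[x_0,\ldots,x_n]$, and let $I \subset R$ be a homogeneous Gorenstein ideal of height three that is not a complete intersection, with Buchsbaum–Eisenbud matrix $M$. Let $i,j,k$ be distinct indices and let $f,g,h \in I$ be the Pfaffians of the matrices obtained from $M$ by deleting row and column $i$, $j$, and $k$, respectively, and assume $f,g,h$ is a regular sequence. Then \[(f, g, h) : I = (f, g, h, u),\] where $u$ is the Pfaffian of the matrix obtained from $M$ by deleting rows and columns $i, j, k$.
   Context: By the Buchsbaum–Eisenbud structure theorem, a homogeneous Gorenstein ideal $I$ of height three has a minimal graded free resolution $0\to R(-t)\to F^*(-t)\to F\to I\to 0$ with $F$ free of odd rank $s$, where the middle map is given by an $s\times s$ skew-symmetric matrix $M$ of homogeneous forms with zero diagonal and all entries in the homogeneous maximal ideal; the Buchsbaum–Eisenbud matrix of $I$ is this $M$, and the $i$-th minimal generator of $I$ is the Pfaffian of the matrix obtained from $M$ by deleting row and column $i$. $I$ is a complete intersection iff $s=3$. *)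

theory Defs
  imports "HOL-Library.Poly_Mapping" "HOL-Library.Extended_Nat"
begin

text \<open>Multivariate polynomials over a field: monomials are finitely supported
exponent vectors, polynomials are finitely supported coefficient
functions on monomials (the library ring structure is convolution).
The ring R = k[x_0,...,x_n] is the subring Rn n of polynomials only involving
the variables x_0,...,x_n.\<close>

type_synonym 'k mpoly = "(nat \<Rightarrow>\<^sub>0 nat) \<Rightarrow>\<^sub>0 'k"

definition Rn :: "nat \<Rightarrow> 'k::field mpoly set" where
  "Rn n = {p :: 'k mpoly. \<forall>m\<in>Poly_Mapping.keys p. Poly_Mapping.keys m \<subseteq> {..n}}"

definition tdeg :: "(nat \<Rightarrow>\<^sub>0 nat) \<Rightarrow> nat" where
  "tdeg m = (\<Sum>v\<in>Poly_Mapping.keys m. Poly_Mapping.lookup m v)"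

definition homogeneous_of_deg :: "nat \<Rightarrow> 'k::field mpoly \<Rightarrow> bool" where
  "homogeneous_of_deg d p \<longleftrightarrow> (\<forall>m\<in>Poly_Mapping.keys p. tdeg m = d)"

definition hcomp :: "nat \<Rightarrow> 'k::field mpoly \<Rightarrow> 'k mpoly" where
  "hcomp d p = Abs_poly_mapping (\<lambda>m. if tdeg m = d then Poly_Mapping.lookup p m else 0)"

definition homogeneous_ideal :: "'k::field mpoly set \<Rightarrow> bool" where
  "homogeneous_ideal I \<longleftrightarrow> (\<forall>p\<in>I. \<forall>d. hcomp d p \<in> I)"

definition ideal_gen :: "nat \<Rightarrow> 'k::field mpoly set \<Rightarrow> 'k mpoly set" where
  "ideal_gen n S = {p. \<exists>F c. finite F \<and> F \<subseteq> S \<and> (\<forall>g\<in>F. c g \<in> Rn n)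
                          \<and> p = (\<Sum>g\<in>F. c g * g)}"

definition is_ideal :: "nat \<Rightarrow> 'k::field mpoly set \<Rightarrow> bool" where
  "is_ideal n I \<longleftrightarrow> I \<subseteq> Rn n \<and> 0 \<in> I \<and> (\<forall>a\<in>I. \<forall>b\<in>I. a + b \<in> I)
      \<and> (\<forall>r\<in>Rn n. \<forall>a\<in>I. r * a \<in> I)"

definition is_prime :: "nat \<Rightarrow> 'k::field mpoly set \<Rightarrow> bool" where
  "is_prime n P \<longleftrightarrow> is_ideal n P \<and> P \<noteq> Rn n
      \<and> (\<forall>a\<in>Rn n. \<forall>b\<in>Rn n. a * b \<in> P \<longrightarrow> a \<in> P \<or> b \<in> P)"

definition prime_height :: "nat \<Rightarrow> 'k::field mpoly set \<Rightarrow> enat" where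
  "prime_height n P = Sup {enat (length c - 1) | c. c \<noteq> [] \<and> sorted_wrt (\<subset>) c
       \<and> (\<forall>Q\<in>set c. is_prime n Q) \<and> last c = P}"

definition ideal_height :: "nat \<Rightarrow> 'k::field mpoly set \<Rightarrow> enat" where
  "ideal_height n I = Inf {prime_height n P | P. is_prime n P \<and> I \<subseteq> P}"

definition colon :: "nat \<Rightarrow> 'k::field mpoly set \<Rightarrow> 'k mpoly set \<Rightarrow> 'k mpoly set" where
  "colon n J I = {r \<in> Rn n. \<forall>a\<in>I. r * a \<in> J}"

definition regular_seq :: "nat \<Rightarrow> 'k::field mpoly list \<Rightarrow> bool" where
  "regular_seq n xs \<longleftrightarrow> set xs \<subseteq> Rn n \<and> ideal_gen n (set xs) \<noteq> Rn n
     \<and> (\<forall>i<length xs. \<forall>r\<in>Rn n. r * xs ! i \<in> ideal_gen n (set (take i xs))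
                                   \<longrightarrow> r \<in> ideal_gen n (set (take i xs)))"

definition complete_intersection :: "nat \<Rightarrow> 'k::field mpoly set \<Rightarrow> bool" where
  "complete_intersection n I \<longleftrightarrow> (\<exists>xs. regular_seq n xs \<and> I = ideal_gen n (set xs))"

text \<open>Pfaffian of the principal submatrix of M on the (increasing) index list,
by expansion along the first row; it is 0 for odd size, 1 for the empty matrix.\<close>
fun pf :: "(nat \<Rightarrow> nat \<Rightarrow> 'a::comm_ring_1) \<Rightarrow> nat list \<Rightarrow> 'a" where
  "pf M [] = 1"
| "pf M (i # rest) = (\<Sum>p<length rest.
      (-1) ^ p * M i (rest ! p) * pf M (take p rest @ drop (Suc p) rest))"

definition pf_del :: "nat \<Rightarrow> (nat \<Rightarrow> nat \<Rightarrow> 'a::comm_ring_1) \<Rightarrow> nat set \<Rightarrow> 'a" where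
  "pf_del s M D = pf M (filter (\<lambda>i. i \<notin> D) [0..<s])"

text \<open>free module R^s (vectors indexed by i < s, zero beyond)\<close>
definition Vn :: "nat \<Rightarrow> nat \<Rightarrow> (nat \<Rightarrow> 'k::field mpoly) set" where
  "Vn n s = {v. (\<forall>i<s. v i \<in> Rn n) \<and> (\<forall>i\<ge>s. v i = 0)}"

definition mat_vec :: "nat \<Rightarrow> (nat \<Rightarrow> nat \<Rightarrow> 'a::comm_ring_1) \<Rightarrow> (nat \<Rightarrow> 'a) \<Rightarrow> nat \<Rightarrow> 'a" where
  "mat_vec s M v = (\<lambda>i. if i < s then (\<Sum>j<s. M i j * v j) else 0)"

text \<open>signed Pfaffian vector (the maps F \<rightarrow> I and R(-t) \<rightarrow> F^*(-t))\<close>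
definition pfvec :: "nat \<Rightarrow> (nat \<Rightarrow> nat \<Rightarrow> 'a::comm_ring_1) \<Rightarrow> nat \<Rightarrow> 'a" where
  "pfvec s M i = (if i < s then (-1) ^ i * pf_del s M {i} else 0)"

text \<open>M is the Buchsbaum-Eisenbud matrix of I: M is an s x s (s odd) skew-symmetric
matrix with zero diagonal, homogeneous entries (compatible with a grading
F = \<Oplus> R(-a_i), twist t) lying in the homogeneous maximal ideal, and
0 \<rightarrow> R(-t) \<rightarrow> F^*(-t) \<rightarrow> F \<rightarrow> I \<rightarrow> 0 (maps: Pfaffian vector, M, Pfaffian vector)
is exact, i.e. a minimal graded free resolution of I.\<close>
definition BE_matrix :: "nat \<Rightarrow> 'k::field mpoly set \<Rightarrow> nat \<Rightarrow> (nat \<Rightarrow> nat \<Rightarrow> 'k mpoly) \<Rightarrow> bool" where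
  "BE_matrix n I s M \<longleftrightarrow> odd s
    \<and> (\<forall>i<s. \<forall>j<s. M i j \<in> Rn n \<and> M j i = - M i j \<and> Poly_Mapping.lookup (M i j) 0 = 0)
    \<and> (\<forall>i<s. M i i = 0)
    \<and> (\<exists>(a::nat \<Rightarrow> int) (t::int). \<forall>i<s. \<forall>j<s. M i j \<noteq> 0 \<longrightarrow>
           t - a i - a j \<ge> 0 \<and> homogeneous_of_deg (nat (t - a i - a j)) (M i j))
    \<and> I = {(\<Sum>i<s. pfvec s M i * v i) | v. v \<in> Vn n s}
    \<and> {v \<in> Vn n s. (\<Sum>i<s. pfvec s M i * v i) = 0} = {mat_vec s M w | w. w \<in> Vn n s}
    \<and> {v \<in> Vn n s. (\<forall>i. mat_vec s M v i = 0)} = {(\<lambda>i. r * pfvec s M i) | r. r \<in> Rn n}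
    \<and> (\<forall>r\<in>Rn n. (\<forall>i<s. r * pfvec s M i = 0) \<longrightarrow> r = 0)"

definition gorenstein_ht3_BE :: "nat \<Rightarrow> 'k::field mpoly set \<Rightarrow> nat \<Rightarrow> (nat \<Rightarrow> nat \<Rightarrow> 'k mpoly) \<Rightarrow> bool" where
  "gorenstein_ht3_BE n I s M \<longleftrightarrow> is_ideal n I \<and> homogeneous_ideal I
     \<and> ideal_height n I = 3 \<and> BE_matrix n I s M"

end

theory Submission
  imports Defs
begin


lemma Rn_0[simp]: "0 \<in> Rn n" by (simp add: Rn_def)
lemma Rn_1[simp]: "1 \<in> Rn n" by (simp add: Rn_def)
lemma Rn_add[simp]: assumes "a \<in> Rn n" "b \<in> Rn n" shows "a + b \<in> Rn n"
proof -
  have "\<forall>m\<in>Poly_Mapping.keys (a + b). Poly_Mapping.keys m \<subseteq> {..n}"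
  proof
    fix m assume "m \<in> Poly_Mapping.keys (a + b)"
    then have "m \<in> Poly_Mapping.keys a \<or> m \<in> Poly_Mapping.keys b" using keys_add[of a b] by blast
    then show "Poly_Mapping.keys m \<subseteq> {..n}" using assms unfolding Rn_def by blast
  qed
  then show ?thesis unfolding Rn_def by simp
qed
lemma Rn_uminus[simp]: "a \<in> Rn n \<Longrightarrow> - a \<in> Rn n"
  unfolding Rn_def by simp
lemma Rn_diff[simp]: "a \<in> Rn n \<Longrightarrow> b \<in> Rn n \<Longrightarrow> a - b \<in> Rn n"
  unfolding diff_conv_add_uminus by (intro Rn_add Rn_uminus)
lemma Rn_mult[simp]: assumes a: "a \<in> Rn n" and b: "b \<in> Rn n" shows "a * b \<in> Rn n"
  unfolding Rn_def
proof (simp only: mem_Collect_eq, intro ballI)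
  fix m assume "m \<in> Poly_Mapping.keys (a*b)"
  then obtain x y where m: "m = x + y" and xy: "x \<in> Poly_Mapping.keys a" "y \<in> Poly_Mapping.keys b"
    using keys_mult by blast
  have "Poly_Mapping.keys x \<subseteq> {..n}" "Poly_Mapping.keys y \<subseteq> {..n}"
    using a b xy unfolding Rn_def by auto
  then show "Poly_Mapping.keys m \<subseteq> {..n}" using keys_add[of x y] m by auto
qed
lemma Rn_sum[simp]: "(\<And>x. x \<in> A \<Longrightarrow> f x \<in> Rn n) \<Longrightarrow> sum f A \<in> Rn n"
proof (induction A rule: infinite_finite_induct)
  case (insert x F) then show ?case by simp
qed simp_all
lemma Rn_pow[simp]: "a \<in> Rn n \<Longrightarrow> a ^ m \<in> Rn n"
  by (induction m) auto
lemma Rn_neg1pow[simp]: "(-1) ^ m \<in> Rn n"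
  by simp


definition dl :: "nat \<Rightarrow> 'b list \<Rightarrow> 'b list" where
  "dl p xs = take p xs @ drop (Suc p) xs"

lemma pf_cons: "pf M (x # L) = (\<Sum>p<length L. (-1)^p * M x (L!p) * pf M (dl p L))"
  by (simp add: dl_def)

declare pf.simps(2)[simp del]

lemma dl_length[simp]: "p < length xs \<Longrightarrow> length (dl p xs) = length xs - 1"
  by (simp add: dl_def)

lemma dl_nth: "p < length xs \<Longrightarrow> q < length xs - 1 \<Longrightarrow> dl p xs ! q = xs ! (if q < p then q else Suc q)"
  by (auto simp: dl_def nth_append min_def)

lemma dl_dl: assumes "p \<le> q" "Suc q < length xs"
  shows "dl q (dl p xs) = dl p (dl (Suc q) xs)"
proof (rule nth_equalityI)
  show "length (dl q (dl p xs)) = length (dl p (dl (Suc q) xs))" using assms by simp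
  fix t assume "t < length (dl q (dl p xs))"
  then have t: "t < length xs - 2" using assms by simp
  show "dl q (dl p xs) ! t = dl p (dl (Suc q) xs) ! t"
    using assms t by (simp add: dl_nth)
qed

lemma dl_append: "dl p (u @ v) = (if p < length u then dl p u @ v else u @ dl (p - length u) v)"
  by (auto simp: dl_def Suc_diff_le)

lemma dl_Cons_Suc[simp]: "dl (Suc p) (b # ys) = b # dl p ys"
  by (simp add: dl_def)
lemma dl_Cons_0[simp]: "dl 0 (b # ys) = ys"
  by (simp add: dl_def)

definition rm2 :: "'b list \<Rightarrow> nat \<Rightarrow> nat \<Rightarrow> 'b list" where
  "rm2 ys p q = dl (min p q) (dl (max p q) ys)"

lemma rm2_sym: "rm2 ys p q = rm2 ys q p"
  by (simp add: rm2_def min.commute max.commute)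

lemma sum_skip:
  fixes G :: "nat \<Rightarrow> 'a::comm_monoid_add"
  assumes "p < n"
  shows "(\<Sum>q<n. (if q = p then 0 else G q)) = (\<Sum>q<n-1. G (if q < p then q else Suc q))"
proof -
  let ?t = "\<lambda>q::nat. if q < p then q else Suc q"
  have inj: "inj_on ?t {..<n-1}" by (auto simp: inj_on_def split: if_splits)
  have img: "?t ` {..<n-1} = {..<n} - {p}"
  proof (rule set_eqI, rule iffI)
    fix x assume "x \<in> ?t ` {..<n-1}" then show "x \<in> {..<n} - {p}" using assms by auto
  next
    fix x assume x: "x \<in> {..<n} - {p}"
    show "x \<in> ?t ` {..<n-1}"
    proof (cases "x < p")
      case True then show ?thesis using x assms by (auto intro!: image_eqI[of _ _ x])
    next
      case False then have "x = ?t (x - 1)" "x - 1 \<in> {..<n-1}" using x by auto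
      then show ?thesis by blast
    qed
  qed
  have "(\<Sum>q<n. (if q = p then 0 else G q)) = (\<Sum>q\<in>{..<n} - {p}. G q)"
    by (rule sum.mono_neutral_cong_right) auto
  also have "\<dots> = (\<Sum>q<n-1. G (?t q))"
    using sum.reindex[OF inj, of G] img by simp
  finally show ?thesis .
qed

lemma double_sum_antisym:
  fixes g :: "nat \<Rightarrow> nat \<Rightarrow> 'a::comm_ring_1"
  assumes as: "\<And>p q. g q p = - g p q" and dg: "\<And>p. g p p = 0"
  shows "(\<Sum>p<n. \<Sum>q<n. g p q) = 0"
proof (induction n)
  case 0 then show ?case by simp
next
  case (Suc n)
  have "(\<Sum>p<Suc n. \<Sum>q<Suc n. g p q) = (\<Sum>p<Suc n. (\<Sum>q<n. g p q) + g p n)"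
    by (simp only: sum.lessThan_Suc)
  also have "\<dots> = (\<Sum>p<n. (\<Sum>q<n. g p q) + g p n) + ((\<Sum>q<n. g n q) + g n n)"
    by (simp only: sum.lessThan_Suc)
  also have "\<dots> = (\<Sum>p<n. \<Sum>q<n. g p q) + (\<Sum>p<n. g p n + g n p) + g n n"
    by (simp only: sum.distrib add.assoc add.left_commute)
  also have "(\<Sum>p<n. g p n + g n p) = 0"
    by (rule sum.neutral) (simp add: as[of n])
  finally show ?case using Suc dg by simp
qed

definition Fpf :: "(nat \<Rightarrow> nat \<Rightarrow> 'a::comm_ring_1) \<Rightarrow> nat \<Rightarrow> nat \<Rightarrow> nat list \<Rightarrow> nat \<Rightarrow> nat \<Rightarrow> 'a" where
  "Fpf M a b ys p q = (if p = q then 0 else (-1)^(p+q+(if p<q then 1 else 0)) * M a (ys!p) * M b (ys!q) * pf M (rm2 ys p q))"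

lemma neg1_pow_swap: "p \<noteq> q \<Longrightarrow> ((-1::'a::comm_ring_1) ^ (q + p + (if q < p then 1 else 0))) = - ((-1) ^ (p + q + (if p < q then 1 else 0)))"
  by (cases "p < q") (auto simp: add.commute)

lemma Fpf_antisym: "Fpf M b a ys q p = - Fpf M a b ys p q"
proof (cases "p = q")
  case True then show ?thesis by (simp add: Fpf_def)
next
  case False
  then show ?thesis using False neg1_pow_swap[OF False] by (simp add: Fpf_def rm2_sym algebra_simps)
qed

lemma inner_expand:
  assumes "p < length ys"
  shows "(-1)^p * M a (ys!p) * pf M (b # dl p ys) = (\<Sum>q<length ys. Fpf M a b ys p q)"
proof -
  let ?n = "length ys"
  have "(\<Sum>q<?n. Fpf M a b ys p q) = (\<Sum>q<?n. if q = p then 0 else Fpf M a b ys p q)"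
    by (rule sum.cong[OF refl]) (simp add: Fpf_def)
  also have "\<dots> = (\<Sum>q<?n - 1. Fpf M a b ys p (if q < p then q else Suc q))"
    using sum_skip[OF assms] .
  also have "\<dots> = (\<Sum>q<?n - 1. (-1)^p * M a (ys!p) * ((-1)^q * M b (dl p ys ! q) * pf M (dl q (dl p ys))))"
  proof (rule sum.cong[OF refl])
    fix q assume q: "q \<in> {..<?n - 1}"
    show "Fpf M a b ys p (if q < p then q else Suc q) = (-1)^p * M a (ys!p) * ((-1)^q * M b (dl p ys ! q) * pf M (dl q (dl p ys)))"
    proof (cases "q < p")
      case True
      have nth: "dl p ys ! q = ys ! q" using q assms True by (simp add: dl_nth)
      have rm: "rm2 ys p q = dl q (dl p ys)" using True by (simp add: rm2_def min_def max_def)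
      have sg: "(-1::'a)^(p + q + (if p < q then 1 else 0)) = (-1)^p * (-1)^q"
        using True by (simp add: power_add)
      show ?thesis using True
        by (simp only: Fpf_def nth rm sg if_False if_True) (simp add: ac_simps)
    next
      case False
      then have dd: "dl q (dl p ys) = dl p (dl (Suc q) ys)" using q by (intro dl_dl) auto
      have nth: "dl p ys ! q = ys ! Suc q" using q assms False by (simp add: dl_nth)
      have rm: "rm2 ys p (Suc q) = dl q (dl p ys)" using False dd by (simp add: rm2_def min_def max_def)
      have sg: "(-1::'a)^(p + Suc q + (if p < Suc q then 1 else 0)) = (-1)^p * (-1)^q"
        using False by (simp add: power_add)
      have ne: "p \<noteq> Suc q" using False by simp
      show ?thesis using False ne
        by (simp only: Fpf_def nth rm sg if_False if_True) (simp add: ac_simps)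
    qed
  qed
  also have "\<dots> = (-1)^p * M a (ys!p) * pf M (b # dl p ys)"
    unfolding pf_cons[of M b] using assms by (simp add: sum_distrib_left del: pf.simps)
  finally show ?thesis by simp
qed

lemma two_expand:
  "pf M (a # b # ys) = M a b * pf M ys - (\<Sum>p<length ys. \<Sum>q<length ys. Fpf M a b ys p q)"
proof -
  have "pf M (a # b # ys) = M a b * pf M ys + (\<Sum>p<length ys. (-1)^(Suc p) * M a (ys!p) * pf M (b # dl p ys))"
    by (simp only: pf_cons[of M a] length_Cons sum.lessThan_Suc_shift) simp
  also have "(\<Sum>p<length ys. (-1)^(Suc p) * M a (ys!p) * pf M (b # dl p ys))
      = - (\<Sum>p<length ys. (-1)^p * M a (ys!p) * pf M (b # dl p ys))"
    by (simp add: sum_negf[symmetric])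
  also have "(\<Sum>p<length ys. (-1)^p * M a (ys!p) * pf M (b # dl p ys)) = (\<Sum>p<length ys. \<Sum>q<length ys. Fpf M a b ys p q)"
    by (rule sum.cong[OF refl]) (rule inner_expand, simp)
  finally show ?thesis by simp
qed

locale skewM =
  fixes M :: "nat \<Rightarrow> nat \<Rightarrow> 'a::comm_ring_1"
  assumes skew: "\<And>a b. M b a = - M a b" and diag: "\<And>a. M a a = 0"
begin

lemma swap0: "pf M (b # a # ys) = - pf M (a # b # ys)"
proof -
  let ?g = "\<lambda>p q. Fpf M a b ys p q + Fpf M b a ys p q"
  have "(\<Sum>p<length ys. \<Sum>q<length ys. ?g p q) = 0"
  proof (rule double_sum_antisym)
    fix p q
    show "?g q p = - ?g p q"
      using Fpf_antisym[of M a b ys p q] Fpf_antisym[of M b a ys p q] by simp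
  next
    fix p show "?g p p = 0" by (simp add: Fpf_def)
  qed
  then have e: "(\<Sum>p<length ys. \<Sum>q<length ys. Fpf M a b ys p q) + (\<Sum>p<length ys. \<Sum>q<length ys. Fpf M b a ys p q) = 0"
    by (simp add: sum.distrib)
  have "pf M (b # a # ys) + pf M (a # b # ys) = (M b a + M a b) * pf M ys
     - ((\<Sum>p<length ys. \<Sum>q<length ys. Fpf M a b ys p q) + (\<Sum>p<length ys. \<Sum>q<length ys. Fpf M b a ys p q))"
    by (simp only: two_expand) (simp add: algebra_simps)
  also have "\<dots> = 0" using e skew[of a b] by simp
  finally show ?thesis by (simp add: eq_neg_iff_add_eq_0)
qed

lemma dup0: "pf M (a # a # ys) = 0"
proof -
  have "(\<Sum>p<length ys. \<Sum>q<length ys. Fpf M a a ys p q) = 0"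
  proof (rule double_sum_antisym)
    fix p q
    show "Fpf M a a ys q p = - Fpf M a a ys p q" by (rule Fpf_antisym)
  next
    fix p show "Fpf M a a ys p p = 0" by (simp add: Fpf_def)
  qed
  then show ?thesis by (simp add: two_expand diag)
qed

lemma swap: "pf M (xs @ a # b # ys) = - pf M (xs @ b # a # ys)"
proof (induction "length xs + length ys" arbitrary: xs ys rule: less_induct)
  case less
  show ?case
  proof (cases xs)
    case Nil then show ?thesis using swap0[of a b ys] by simp
  next
    case (Cons c xs')
    define L where "L = xs' @ a # b # ys"
    define L' where "L' = xs' @ b # a # ys"
    define m where "m = length xs'"
    define N where "N = length L"
    have lenL': "length L' = N" by (simp add: L_def L'_def N_def)
    have mN: "Suc m < N" by (simp add: m_def N_def L_def)
    define t where "t = (\<lambda>p. (-1)^p * M c (L!p) * pf M (dl p L))"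
    define t' where "t' = (\<lambda>p. (-1)^p * M c (L'!p) * pf M (dl p L'))"
    define \<sigma> where "\<sigma> = (\<lambda>p. if p = m then Suc m else if p = Suc m then m else p)"
    have key: "t' p = - t (\<sigma> p)" if p: "p < N" for p
    proof -
      consider (lt) "p < m" | (eq) "p = m" | (eq1) "p = Suc m" | (gt) k where "p = Suc (Suc (m + k))"
        by (metis add_Suc_right less_imp_Suc_add linorder_neqE_nat not_less_eq)
      then show ?thesis
      proof cases
        case lt
        have IH: "pf M (dl p xs' @ a # b # ys) = - pf M (dl p xs' @ b # a # ys)"
          using lt by (intro less) (auto simp: Cons m_def)
        have "\<sigma> p = p" using lt by (simp add: \<sigma>_def)
        then show ?thesis using lt IH
          by (simp add: t_def t'_def L_def L'_def m_def dl_append nth_append)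
      next
        case eq
        then show ?thesis
          by (simp add: t_def t'_def L_def L'_def m_def \<sigma>_def dl_append nth_append)
      next
        case eq1
        then show ?thesis
          by (simp add: t_def t'_def L_def L'_def m_def \<sigma>_def dl_append nth_append)
      next
        case gt
        have kl: "k < length ys" using gt p by (simp add: N_def L_def m_def)
        have IH: "pf M (xs' @ a # b # dl k ys) = - pf M (xs' @ b # a # dl k ys)"
          using kl by (intro less) (auto simp: Cons)
        have "\<sigma> p = p" using gt by (simp add: \<sigma>_def)
        then show ?thesis using gt IH
          by (simp add: t_def t'_def L_def L'_def m_def dl_append nth_append)
      qed
    qed
    have "pf M (xs @ b # a # ys) = (\<Sum>p<N. t' p)"
      proof -
        have e: "xs @ b # a # ys = c # L'" by (simp add: Cons L'_def)
        show ?thesis unfolding e pf_cons lenL' t'_def ..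
      qed
    also have "\<dots> = (\<Sum>p<N. - t (\<sigma> p))" using key by simp
    also have "\<dots> = - (\<Sum>p<N. t (\<sigma> p))" by (simp add: sum_negf)
    also have "(\<Sum>p<N. t (\<sigma> p)) = (\<Sum>p<N. t p)"
      by (rule sum.reindex_bij_witness[of _ \<sigma> \<sigma>]) (use mN in \<open>auto simp: \<sigma>_def\<close>)
    also have "(\<Sum>p<N. t p) = pf M (xs @ a # b # ys)"
      proof -
        have e: "xs @ a # b # ys = c # L" by (simp add: Cons L_def)
        show ?thesis unfolding e pf_cons N_def t_def ..
      qed
    finally show ?thesis by simp
  qed
qed

lemma move: "pf M (xs @ a # ys @ zs) = (-1)^length ys * pf M (xs @ ys @ a # zs)"
proof (induction ys arbitrary: xs)
  case Nil then show ?case by simp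
next
  case (Cons y ys)
  have "pf M (xs @ a # (y # ys) @ zs) = - pf M (xs @ y # a # ys @ zs)"
    using swap[of xs a y "ys @ zs"] by simp
  also have "pf M (xs @ y # a # ys @ zs) = pf M ((xs @ [y]) @ a # ys @ zs)" by simp
  also have "\<dots> = (-1)^length ys * pf M ((xs @ [y]) @ ys @ a # zs)" by (rule Cons)
  finally show ?case by simp
qed

lemma dup: assumes "a \<in> set L" shows "pf M (a # L) = 0"
proof -
  obtain u v where L: "L = u @ a # v" using assms by (meson split_list)
  have "pf M ([a] @ a # u @ v) = (-1)^length u * pf M ([a] @ u @ a # v)" by (rule move)
  then have "(-1)^length u * pf M (a # L) = 0" using dup0[of a "u @ v"] by (simp add: L)
  then have "(-1)^length u * ((-1)^length u * pf M (a # L)) = 0" by simp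
  then show ?thesis by simp
qed

lemma insert_pf: "q \<le> length L \<Longrightarrow> pf M (a # L) = (-1)^q * pf M (take q L @ a # drop q L)"
  using move[of "[]" a "take q L" "drop q L"] by (simp add: min_def)

end


definition Mx :: "nat \<Rightarrow> (nat \<Rightarrow> nat \<Rightarrow> 'a::comm_ring_1) \<Rightarrow> nat \<Rightarrow> nat \<Rightarrow> 'a" where
  "Mx s M = (\<lambda>a b. if a < s \<and> b < s then M a b else 0)"

lemma skewM_Mx: assumes "\<forall>a<s. \<forall>b<s. M b a = - M a b" "\<forall>a<s. M a a = 0"
  shows "skewM (Mx s M)"
proof
  fix a b show "Mx s M b a = - Mx s M a b"
  proof (cases "a < s \<and> b < s")
    case True
    then have "M b a = - M a b" using assms(1) by blast
    then show ?thesis using True by (simp add: Mx_def)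
  next
    case False then show ?thesis by (auto simp: Mx_def)
  qed
next
  fix a show "Mx s M a a = 0" using assms(2) by (simp add: Mx_def)
qed

lemma set_dl: "set (dl p L) \<subseteq> set L"
  by (auto simp: dl_def dest: in_set_takeD in_set_dropD)

lemma pf_Mx: "set xs \<subseteq> {..<s} \<Longrightarrow> pf (Mx s M) xs = pf M xs"
proof (induction "length xs" arbitrary: xs rule: less_induct)
  case less
  show ?case
  proof (cases xs)
    case Nil then show ?thesis by simp
  next
    case (Cons x L)
    have "pf (Mx s M) (dl p L) = pf M (dl p L)" if "p < length L" for p
      using less set_dl[of p L] that by (intro less) (auto simp: Cons)
    moreover have "Mx s M x (L!p) = M x (L!p)" if "p < length L" for p
    proof -
      have "L!p \<in> set xs" using nth_mem[OF that] by (simp add: Cons)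
      moreover have "x \<in> set xs" by (simp add: Cons)
      ultimately show ?thesis using less.prems by (auto simp: Mx_def)
    qed
    ultimately show ?thesis by (simp add: Cons pf_cons del: pf.simps)
  qed
qed

lemma pf_Rn: "(\<forall>a\<in>set xs. \<forall>b\<in>set xs. M a b \<in> Rn n) \<Longrightarrow> pf M xs \<in> Rn n"
proof (induction "length xs" arbitrary: xs rule: less_induct)
  case less
  show ?case
  proof (cases xs)
    case Nil then show ?thesis by simp
  next
    case (Cons x L)
    have "pf M (dl p L) \<in> Rn n" if "p < length L" for p
    proof (rule less)
      show "length (dl p L) < length xs" using that by (simp add: Cons)
      show "\<forall>a\<in>set (dl p L). \<forall>b\<in>set (dl p L). M a b \<in> Rn n"
        using less.prems set_dl[of p L] unfolding Cons by (meson list.set_intros(2) subsetD)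
    qed
    moreover have "M x (L!p) \<in> Rn n" if "p < length L" for p
      using less that by (auto simp: Cons)
    ultimately show ?thesis unfolding Cons pf_cons by (intro Rn_sum Rn_mult Rn_neg1pow) auto
  qed
qed

lemma dl_distinct: assumes "distinct L" "q < length L" shows "dl q L = filter (\<lambda>l. l \<noteq> L!q) L"
proof -
  define x where "x = L!q"
  have L: "L = take q L @ x # drop (Suc q) L" using assms by (simp add: id_take_nth_drop x_def)
  have d: "distinct (take q L @ x # drop (Suc q) L)" using assms(1) L by metis
  then have n1: "x \<notin> set (take q L)" and n2: "x \<notin> set (drop (Suc q) L)" by auto
  have "filter (\<lambda>l. l \<noteq> x) (take q L @ x # drop (Suc q) L) = take q L @ drop (Suc q) L"
  proof -
    have "filter (\<lambda>l. l \<noteq> x) (take q L) = take q L" by (rule filter_True) (use n1 in auto)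
    moreover have "filter (\<lambda>l. l \<noteq> x) (drop (Suc q) L) = drop (Suc q) L" by (rule filter_True) (use n2 in auto)
    ultimately show ?thesis by simp
  qed
  then have "filter (\<lambda>l. l \<noteq> x) L = take q L @ drop (Suc q) L" using L by metis
  then show ?thesis by (simp add: dl_def x_def)
qed

definition Lab :: "nat \<Rightarrow> nat \<Rightarrow> nat \<Rightarrow> nat list" where
  "Lab s a b = filter (\<lambda>l. l \<notin> {a,b}) [0..<s]"

definition wv :: "nat \<Rightarrow> (nat \<Rightarrow> nat \<Rightarrow> 'a::comm_ring_1) \<Rightarrow> nat \<Rightarrow> nat \<Rightarrow> nat \<Rightarrow> 'a" where
  "wv s M a b l = (\<Sum>p<length (Lab s a b). if Lab s a b ! p = l then (-1)^p * pf M (dl p (Lab s a b)) else 0)"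

lemma Lab_sym: "Lab s a b = Lab s b a"
  by (simp add: Lab_def insert_commute)

lemma wv_sym: "wv s M a b = wv s M b a"
  by (rule ext) (simp only: wv_def Lab_sym[of s a b])

lemma Lab_split: assumes "a < s" "a \<noteq> b"
  shows "Lab s a b = filter (\<lambda>l. l \<notin> {b}) [0..<a] @ filter (\<lambda>l. l \<notin> {b}) [Suc a..<s]"
    and "filter (\<lambda>l. l \<notin> {b}) [0..<s] = filter (\<lambda>l. l \<notin> {b}) [0..<a] @ a # filter (\<lambda>l. l \<notin> {b}) [Suc a..<s]"
proof -
  have u: "[0..<s] = [0..<a] @ a # [Suc a..<s]"
    using assms upt_add_eq_append[of 0 a "s - a"] upt_conv_Cons[of a s] by simp
  have f1: "filter (\<lambda>l. l \<notin> {a,b}) [0..<a] = filter (\<lambda>l. l \<notin> {b}) [0..<a]"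
    by (rule filter_cong) auto
  have f2: "filter (\<lambda>l. l \<notin> {a,b}) [Suc a..<s] = filter (\<lambda>l. l \<notin> {b}) [Suc a..<s]"
    by (rule filter_cong) auto
  have "Lab s a b = filter (\<lambda>l. l \<notin> {a,b}) [0..<a] @ filter (\<lambda>l. l \<notin> {a,b}) [Suc a..<s]"
    unfolding Lab_def by (subst u) (simp del: upt_Suc)
  then show "Lab s a b = filter (\<lambda>l. l \<notin> {b}) [0..<a] @ filter (\<lambda>l. l \<notin> {b}) [Suc a..<s]"
    by (simp only: f1 f2)
  show "filter (\<lambda>l. l \<notin> {b}) [0..<s] = filter (\<lambda>l. l \<notin> {b}) [0..<a] @ a # filter (\<lambda>l. l \<notin> {b}) [Suc a..<s]"
    by (subst u) (simp add: assms del: upt_Suc)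
qed

lemma Lab_set: "set (Lab s a b) = {l. l < s \<and> l \<noteq> a \<and> l \<noteq> b}"
  by (auto simp: Lab_def)

lemma Lab_distinct: "distinct (Lab s a b)" by (simp add: Lab_def)

lemma wv_at_a: "wv s M a b a = 0"
  unfolding wv_def by (rule sum.neutral) (use nth_mem in \<open>force simp: Lab_set\<close>)

lemma wv_out: "l \<ge> s \<Longrightarrow> wv s M a b l = 0"
  unfolding wv_def by (rule sum.neutral) (use nth_mem in \<open>force simp: Lab_set\<close>)

context
  fixes s :: nat and M :: "nat \<Rightarrow> nat \<Rightarrow> 'a::comm_ring_1"
  assumes skew: "\<forall>a<s. \<forall>b<s. M b a = - M a b" and diag: "\<forall>a<s. M a a = 0"
begin

interpretation X: skewM "Mx s M" using skewM_Mx[OF skew diag] .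

lemma mat_vec_wv: assumes "m < s"
  shows "mat_vec s M (wv s M a b) m = pf M (m # Lab s a b)"
proof -
  let ?L = "Lab s a b"
  have inL: "?L ! p < s" if "p < length ?L" for p
    using that nth_mem[OF that] by (simp add: Lab_set)
  have "mat_vec s M (wv s M a b) m = (\<Sum>l<s. M m l * wv s M a b l)"
    using assms by (simp add: mat_vec_def)
  also have "\<dots> = (\<Sum>l<s. \<Sum>p<length ?L. if ?L ! p = l then M m l * ((-1)^p * pf M (dl p ?L)) else 0)"
    by (simp add: wv_def sum_distrib_left if_distrib cong: if_cong)
  also have "\<dots> = (\<Sum>p<length ?L. \<Sum>l<s. if ?L ! p = l then M m l * ((-1)^p * pf M (dl p ?L)) else 0)"
    by (rule sum.swap)
  also have "\<dots> = (\<Sum>p<length ?L. M m (?L!p) * ((-1)^p * pf M (dl p ?L)))"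
    by (rule sum.cong[OF refl]) (use inL in \<open>simp add: sum.delta\<close>)
  also have "\<dots> = pf M (m # ?L)"
    by (simp add: pf_cons algebra_simps del: pf.simps)
  finally show ?thesis .
qed

lemma pfM_Mx: "m < s \<Longrightarrow> pf M (m # Lab s a b) = pf (Mx s M) (m # Lab s a b)"
  by (rule pf_Mx[symmetric]) (auto simp: Lab_set)

lemma mat_vec_wv_other: assumes "m < s" "m \<noteq> a" "m \<noteq> b"
  shows "mat_vec s M (wv s M a b) m = 0"
  using assms by (simp add: mat_vec_wv pfM_Mx X.dup Lab_set)

lemma mat_vec_wv_a: assumes "a < s" "a \<noteq> b"
  shows "\<exists>\<epsilon>. (\<epsilon> = 1 \<or> \<epsilon> = -1) \<and> mat_vec s M (wv s M a b) a = \<epsilon> * pf_del s M {b}"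
proof -
  let ?U = "filter (\<lambda>l. l \<notin> {b}) [0..<a]" and ?V = "filter (\<lambda>l. l \<notin> {b}) [Suc a..<s]"
  have "pf (Mx s M) (a # Lab s a b) = (-1)^length ?U * pf (Mx s M) (take (length ?U) (Lab s a b) @ a # drop (length ?U) (Lab s a b))"
    by (rule X.insert_pf) (simp add: Lab_split(1)[OF assms])
  also have "take (length ?U) (Lab s a b) @ a # drop (length ?U) (Lab s a b) = filter (\<lambda>l. l \<notin> {b}) [0..<s]"
    using Lab_split[OF assms] by simp
  also have "pf (Mx s M) (filter (\<lambda>l. l \<notin> {b}) [0..<s]) = pf_del s M {b}"
    unfolding pf_del_def by (rule pf_Mx) auto
  finally have "mat_vec s M (wv s M a b) a = (-1)^length ?U * pf_del s M {b}"
    using assms by (simp add: mat_vec_wv pfM_Mx)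
  then show ?thesis by (metis neg_one_even_power neg_one_odd_power)
qed

lemma wv_at_c: assumes "c < s" "c \<noteq> a" "c \<noteq> b"
  shows "\<exists>\<epsilon>. (\<epsilon> = 1 \<or> \<epsilon> = -1) \<and> wv s M a b c = \<epsilon> * pf_del s M {a,b,c}"
proof -
  let ?L = "Lab s a b"
  have "c \<in> set ?L" using assms by (simp add: Lab_set)
  then obtain q where q: "q < length ?L" "?L ! q = c" by (auto simp: in_set_conv_nth)
  have "wv s M a b c = (\<Sum>p<length ?L. if p = q then (-1)^p * pf M (dl p ?L) else 0)"
    unfolding wv_def
    by (rule sum.cong[OF refl]) (use q Lab_distinct in \<open>auto simp: nth_eq_iff_index_eq\<close>)
  also have "\<dots> = (-1)^q * pf M (dl q ?L)" using q by (simp add: sum.delta)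
  also have "dl q ?L = filter (\<lambda>l. l \<notin> {a,b,c}) [0..<s]"
    using dl_distinct[OF Lab_distinct q(1)] q by (auto simp: Lab_def intro: filter_cong)
  finally have "wv s M a b c = (-1)^q * pf_del s M {a,b,c}" by (simp add: pf_del_def)
  then show ?thesis by (metis neg_one_even_power neg_one_odd_power)
qed

end

lemma wv_Vn: fixes M :: "nat \<Rightarrow> nat \<Rightarrow> 'k::field mpoly" assumes "\<forall>a<s. \<forall>b<s. M a b \<in> Rn n" shows "wv s M a b \<in> Vn n s"
proof -
  have "pf M (dl p (Lab s a b)) \<in> Rn n" if "p < length (Lab s a b)" for p
    by (rule pf_Rn) (use assms set_dl[of p "Lab s a b"] in \<open>auto simp: Lab_set\<close>)
  then have "wv s M a b l \<in> Rn n" for l unfolding wv_def by (auto intro!: Rn_sum)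
  then show ?thesis by (auto simp: Vn_def wv_out)
qed


lemma ideal_gen_empty: "ideal_gen n {} = {0}"
  by (auto simp: ideal_gen_def)

lemma ideal_gen_insert:
  "ideal_gen n (insert a S) = {x * a + y | x y. x \<in> Rn n \<and> y \<in> ideal_gen n S}"
proof (rule set_eqI, rule iffI)
  fix p assume "p \<in> ideal_gen n (insert a S)"
  then obtain F c where F: "finite F" "F \<subseteq> insert a S" "\<forall>g\<in>F. c g \<in> Rn n" "p = (\<Sum>g\<in>F. c g * g)"
    by (auto simp: ideal_gen_def)
  show "p \<in> {x * a + y | x y. x \<in> Rn n \<and> y \<in> ideal_gen n S}"
  proof (cases "a \<in> F")
    case True
    have "p = c a * a + (\<Sum>g\<in>F - {a}. c g * g)" using F True by (simp add: sum.remove)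
    moreover have "(\<Sum>g\<in>F - {a}. c g * g) \<in> ideal_gen n S"
      unfolding ideal_gen_def using F by (intro CollectI exI[of _ "F - {a}"] exI[of _ c]) auto
    ultimately show ?thesis using F True by blast
  next
    case False
    have "p \<in> ideal_gen n S" unfolding ideal_gen_def using F False by auto
    then show ?thesis by (intro CollectI exI[of _ 0] exI[of _ p]) simp
  qed
next
  fix p assume "p \<in> {x * a + y | x y. x \<in> Rn n \<and> y \<in> ideal_gen n S}"
  then obtain x y where xy: "x \<in> Rn n" "y \<in> ideal_gen n S" "p = x * a + y" by blast
  then obtain G c where G: "finite G" "G \<subseteq> S" "\<forall>g\<in>G. c g \<in> Rn n" "y = (\<Sum>g\<in>G. c g * g)"
    by (auto simp: ideal_gen_def)
  show "p \<in> ideal_gen n (insert a S)"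
  proof (cases "a \<in> G")
    case True
    let ?c = "c(a := c a + x)"
    have "(\<Sum>g\<in>G. ?c g * g) = ?c a * a + (\<Sum>g\<in>G - {a}. ?c g * g)" using G True by (simp add: sum.remove)
    also have "(\<Sum>g\<in>G - {a}. ?c g * g) = (\<Sum>g\<in>G - {a}. c g * g)" by (rule sum.cong) auto
    also have "?c a * a + \<dots> = x * a + (c a * a + (\<Sum>g\<in>G - {a}. c g * g))" by (simp add: algebra_simps)
    also have "c a * a + (\<Sum>g\<in>G - {a}. c g * g) = y" using G True by (simp add: sum.remove)
    finally have "p = (\<Sum>g\<in>G. ?c g * g)" using xy by simp
    then show ?thesis unfolding ideal_gen_def using G xy True
      by (intro CollectI exI[of _ G] exI[of _ ?c]) auto
  next
    case False
    let ?c = "c(a := x)"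
    have "(\<Sum>g\<in>insert a G. ?c g * g) = x * a + (\<Sum>g\<in>G. ?c g * g)" using G False by simp
    also have "(\<Sum>g\<in>G. ?c g * g) = y" using G False by (auto intro!: sum.cong)
    finally have "p = (\<Sum>g\<in>insert a G. ?c g * g)" using xy by simp
    then show ?thesis unfolding ideal_gen_def using G xy False
      by (intro CollectI exI[of _ "insert a G"] exI[of _ ?c]) auto
  qed
qed

lemma mem1: "p \<in> ideal_gen n {a} \<longleftrightarrow> (\<exists>x\<in>Rn n. p = x * a)"
  by (auto simp: ideal_gen_insert ideal_gen_empty)
lemma mem2: "p \<in> ideal_gen n {a,b} \<longleftrightarrow> (\<exists>x\<in>Rn n. \<exists>y\<in>Rn n. p = x * a + y * b)"
  by (auto simp: ideal_gen_insert ideal_gen_empty)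
lemma mem3: "p \<in> ideal_gen n {a,b,c} \<longleftrightarrow> (\<exists>x\<in>Rn n. \<exists>y\<in>Rn n. \<exists>z\<in>Rn n. p = x * a + y * b + z * c)"
  by (simp add: ideal_gen_insert ideal_gen_empty add.assoc) blast
lemma mem4: "p \<in> ideal_gen n {a,b,c,d} \<longleftrightarrow> (\<exists>x\<in>Rn n. \<exists>y\<in>Rn n. \<exists>z\<in>Rn n. \<exists>w\<in>Rn n. p = x * a + y * b + z * c + w * d)"
  by (simp add: ideal_gen_insert ideal_gen_empty add.assoc) blast

context
  fixes n :: nat and f g h :: "'k::field mpoly"
  assumes R1: "\<forall>r\<in>Rn n. r * g \<in> ideal_gen n {f} \<longrightarrow> r \<in> ideal_gen n {f}"
    and R2: "\<forall>r\<in>Rn n. r * h \<in> ideal_gen n {f, g} \<longrightarrow> r \<in> ideal_gen n {f, g}"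
    and fnz: "f \<noteq> 0" and fR: "f \<in> Rn n" and gR: "g \<in> Rn n" and hR: "h \<in> Rn n"
begin

lemma koszul1:
  assumes "a \<in> Rn n" "b \<in> Rn n" "c \<in> Rn n" "a * f + b * g + c * h = 0"
  shows "\<exists>x\<in>Rn n. \<exists>y\<in>Rn n. \<exists>z\<in>Rn n. a = x * g + y * h \<and> b = - x * f + z * h \<and> c = - y * f - z * g"
proof -
  have "c * h = (a * f + b * g + c * h) - a * f - b * g" by simp
  also have "\<dots> = (-a) * f + (-b) * g" using assms(4) by simp
  finally have "c * h \<in> ideal_gen n {f, g}"
    unfolding mem2 using assms by (intro bexI[of _ "-a"] bexI[of _ "-b"]) simp_all
  then have "c \<in> ideal_gen n {f, g}" using R2 assms(3) by blast
  then obtain y' z' where yz: "y' \<in> Rn n" "z' \<in> Rn n" "c = y' * f + z' * g"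
    unfolding mem2 by blast
  have e1: "(a + y' * h) * f + (b + z' * h) * g = 0" using assms(4) yz(3) by (simp add: algebra_simps)
  have "(b + z' * h) * g = ((a + y' * h) * f + (b + z' * h) * g) - (a + y' * h) * f" by simp
  also have "\<dots> = - ((a + y' * h) * f)" using e1 by simp
  also have "\<dots> = (- (a + y' * h)) * f" by (simp only: minus_mult_left)
  finally have "(b + z' * h) * g \<in> ideal_gen n {f}"
    unfolding mem1 using assms yz hR by (intro bexI[of _ "- (a + y' * h)"]) simp_all
  moreover have "b + z' * h \<in> Rn n" using assms yz hR by simp
  ultimately have "b + z' * h \<in> ideal_gen n {f}" using R1 by blast
  then obtain x' where x': "x' \<in> Rn n" "b + z' * h = x' * f"
    unfolding mem1 by blast
  have "(a + y' * h + x' * g) * f = (a + y' * h) * f + (x' * f) * g" by (simp add: algebra_simps)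
  also have "\<dots> = (a + y' * h) * f + (b + z' * h) * g" using x'(2) by simp
  also have "\<dots> = 0" using e1 .
  finally have "(a + y' * h + x' * g) * f = 0" .
  then have z: "a + y' * h + x' * g = 0" using fnz by simp
  have "a = (a + y' * h + x' * g) + (- x') * g + (- y') * h" by (simp add: algebra_simps)
  then have "a = (- x') * g + (- y') * h" by (simp only: z add_0)
  moreover have "b = - (- x') * f + (- z') * h"
  proof -
    have "b = (b + z' * h) - z' * h" by simp
    also have "\<dots> = x' * f - z' * h" using x'(2) by simp
    finally show ?thesis by simp
  qed
  moreover have "c = - (- y') * f - (- z') * g" using yz(3) by simp
  ultimately show ?thesis using x' yz by (intro bexI[of _ "- x'"] bexI[of _ "- y'"] bexI[of _ "- z'"]) simp_all
qed

lemma koszul2: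
  assumes "x \<in> Rn n" "y \<in> Rn n" "z \<in> Rn n" "- x * f + z * h = 0" "- y * f - z * g = 0"
  shows "\<exists>t\<in>Rn n. x = t * h \<and> y = - t * g \<and> z = t * f"
proof -
  have "z * g = - (- y * f - z * g) + (- y) * f" by simp
  also have "\<dots> = (- y) * f" using assms(5) by simp
  finally have "z * g \<in> ideal_gen n {f}"
    unfolding mem1 using assms by (intro bexI[of _ "- y"]) simp_all
  then have "z \<in> ideal_gen n {f}" using R1 assms(3) by blast
  then obtain t where t: "t \<in> Rn n" "z = t * f" unfolding mem1 by blast
  have "(y + t * g) * f = - (- y * f - z * g)" using t by (simp add: algebra_simps)
  then have "(y + t * g) * f = 0" by (simp only: assms(5) minus_zero)
  then have "y + t * g = 0" using fnz by simp
  then have "y = - t * g" by (simp add: eq_neg_iff_add_eq_0)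
  moreover have "(t * h - x) * f = - x * f + z * h" using t by (simp add: algebra_simps)
  then have "(t * h - x) * f = 0" by (simp only: assms(4))
  then have "x = t * h" using fnz by simp
  ultimately show ?thesis using t by blast
qed

end

lemma pm1_sq: "e = 1 \<or> e = -1 \<Longrightarrow> e * e = (1::'a::comm_ring_1)"
  by (elim disjE) simp_all

lemma pm1_mult: "e = 1 \<or> e = -1 \<Longrightarrow> d = 1 \<or> d = -1 \<Longrightarrow> e * d = 1 \<or> e * d = (-1::'a::comm_ring_1)"
  by (elim disjE) simp_all

lemma sign_choice:
  fixes x y sa sb ea eb :: "'a::idom"
  assumes A: "sa = 1 \<or> sa = -1" and B: "sb = 1 \<or> sb = -1" and C: "ea = 1 \<or> ea = -1" and D: "eb = 1 \<or> eb = -1"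
    and E: "(sa * ea + sb * eb) * x * y = 0"
  shows "\<exists>c. (c = 1 \<or> c = -1) \<and> c * ea * y = sa * y \<and> c * eb * x = - sb * x"
proof -
  have sqa: "ea * ea = 1" using pm1_sq[OF C] .
  have sqb: "eb * eb = 1" using pm1_sq[OF D] .
  have c1: "sa * ea = 1 \<or> sa * ea = -1" using pm1_mult[OF A C] .
  have c2: "- sb * eb = 1 \<or> - sb * eb = -1" using pm1_mult[OF B D] by auto
  have ya: "(sa * ea) * ea * y = sa * y" by (simp only: mult.assoc sqa mult_1_left mult_1_right)
  have xb: "(- sb * eb) * eb * x = - sb * x" by (simp only: mult.assoc sqb mult_1_left mult_1_right)
  have "x = 0 \<or> y = 0 \<or> sa * ea + sb * eb = 0" using E by (simp add: disj_commute disj_left_commute)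
  then show ?thesis
  proof (elim disjE)
    assume "x = 0" then show ?thesis using c1 ya by (intro exI[of _ "sa * ea"]) simp
  next
    assume "y = 0" then show ?thesis using c2 xb by (intro exI[of _ "- sb * eb"]) simp
  next
    assume "sa * ea + sb * eb = 0"
    then have e: "sa * ea = - sb * eb" by (simp add: eq_neg_iff_add_eq_0)
    show ?thesis using c1 ya xb e by (intro exI[of _ "sa * ea"]) simp
  qed
qed

lemma sum_mat_vec:
  "(\<Sum>m<s. v m * (\<Sum>l<s. M l m * c l)) = (\<Sum>l<s. mat_vec s M v l * (c l :: 'a::comm_ring_1))"
proof -
  have "(\<Sum>m<s. v m * (\<Sum>l<s. M l m * c l)) = (\<Sum>m<s. \<Sum>l<s. M l m * v m * c l)"
    by (simp add: sum_distrib_left algebra_simps)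
  also have "\<dots> = (\<Sum>l<s. \<Sum>m<s. M l m * v m * c l)" by (rule sum.swap)
  also have "\<dots> = (\<Sum>l<s. mat_vec s M v l * c l)"
    by (simp add: mat_vec_def sum_distrib_right)
  finally show ?thesis .
qed

lemma mat_vec_lin:
  "mat_vec s M (\<lambda>l. x * A l - y * B l + z * C l) m = x * mat_vec s M A m - y * mat_vec s M B m + z * mat_vec s M C m"
  by (simp add: mat_vec_def sum_distrib_left sum.distrib sum_subtractf algebra_simps)

lemma mat_vec_scale: "mat_vec s M (\<lambda>l. c * A l) m = c * mat_vec s M A m"
  by (simp add: mat_vec_def sum_distrib_left algebra_simps)


lemma sum_two_points:
  fixes a b s :: nat
  assumes "a < s" "b < s" "a \<noteq> b"
  shows "(\<Sum>l<s. (if l = a then X else if l = b then Y else 0) * (P l :: 'a::comm_ring_1)) = X * P a + Y * P b"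
proof -
  have "(\<Sum>l<s. (if l = a then X else if l = b then Y else 0) * P l)
      = (\<Sum>l<s. (if l = a then X * P a else 0) + (if l = b then Y * P b else 0))"
    by (rule sum.cong[OF refl]) (use assms in auto)
  also have "\<dots> = (\<Sum>l<s. if l = a then X * P a else 0) + (\<Sum>l<s. if l = b then Y * P b else 0)"
    by (rule sum.distrib)
  also have "(\<Sum>l<s. if l = a then X * P a else 0) = X * P a"
    by (subst sum.delta) (use assms in auto)
  also have "(\<Sum>l<s. if l = b then Y * P b else 0) = Y * P b"
    by (subst sum.delta) (use assms in auto)
  finally show ?thesis .
qed

lemma pair_vec:
  fixes M :: "nat \<Rightarrow> nat \<Rightarrow> 'k::field mpoly"
  assumes skew: "\<forall>a<s. \<forall>b<s. M b a = - M a b" and diag: "\<forall>a<s. M a a = 0"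
    and MR: "\<forall>a<s. \<forall>b<s. M a b \<in> Rn n"
    and PM: "\<forall>m<s. (\<Sum>l<s. M l m * pfvec s M l) = 0"
    and ab: "a < s" "b < s" "a \<noteq> b"
  shows "\<exists>W\<in>Vn n s. (\<forall>m. mat_vec s M W m = (if m = a then (-1)^a * pf_del s M {b}
              else if m = b then - ((-1)^b * pf_del s M {a}) else 0))
          \<and> W a = 0 \<and> W b = 0
          \<and> (\<forall>c<s. c \<noteq> a \<longrightarrow> c \<noteq> b \<longrightarrow> (\<exists>\<epsilon>. (\<epsilon> = 1 \<or> \<epsilon> = -1) \<and> W c = \<epsilon> * pf_del s M {a,b,c}))"
proof -
  define w where "w = wv s M a b"
  define ga where "ga = pf_del s M {a}"
  define gb where "gb = pf_del s M {b}"
  obtain ea where ea: "ea = 1 \<or> ea = -1" "mat_vec s M w a = ea * gb"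
    using mat_vec_wv_a[OF skew diag ab(1) ab(3)] unfolding w_def gb_def by blast
  obtain eb where eb: "eb = 1 \<or> eb = -1" "mat_vec s M w b = eb * ga"
    using mat_vec_wv_a[OF skew diag ab(2)] ab(3) wv_sym[of s M a b] unfolding w_def ga_def by metis
  have Mw: "mat_vec s M w m = (if m = a then ea * gb else if m = b then eb * ga else 0)" for m
  proof (cases "m < s")
    case True
    then show ?thesis using ea eb mat_vec_wv_other[OF skew diag True] unfolding w_def by auto
  next
    case False then show ?thesis using ab by (auto simp: mat_vec_def)
  qed
  have "(\<Sum>m<s. w m * (\<Sum>l<s. M l m * pfvec s M l)) = 0" using PM by simp
  then have "(\<Sum>l<s. mat_vec s M w l * pfvec s M l) = 0" by (simp only: sum_mat_vec)
  then have "(ea * gb) * pfvec s M a + (eb * ga) * pfvec s M b = 0"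
    by (simp only: Mw sum_two_points[OF ab])
  then have rel: "((-1)^a * ea + (-1)^b * eb) * ga * gb = 0"
    using ab by (simp add: pfvec_def ga_def gb_def algebra_simps)
  obtain c where c: "c = 1 \<or> c = -1" "c * ea * gb = (-1)^a * gb" "c * eb * ga = - ((-1)^b) * ga"
    using sign_choice[OF _ _ ea(1) eb(1) rel] by (metis neg_one_even_power neg_one_odd_power)
  define W where "W = (\<lambda>l. c * w l)"
  have wV: "w \<in> Vn n s" unfolding w_def by (rule wv_Vn[OF MR])
  have cR: "c \<in> Rn n" using c(1) by auto
  have WV: "W \<in> Vn n s" using wV cR by (auto simp: Vn_def W_def)
  have MW: "mat_vec s M W m = (if m = a then (-1)^a * gb else if m = b then - ((-1)^b * ga) else 0)" for m
    unfolding W_def mat_vec_scale Mw using c by (auto simp: mult.assoc)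
  have Wa: "W a = 0" "W b = 0" unfolding W_def w_def using wv_at_a[of s M a b] wv_at_a[of s M b a] wv_sym[of s M a b] by auto
  have Wc: "\<exists>\<epsilon>. (\<epsilon> = 1 \<or> \<epsilon> = -1) \<and> W c' = \<epsilon> * pf_del s M {a,b,c'}" if cs: "c' < s" "c' \<noteq> a" "c' \<noteq> b" for c'
  proof -
    obtain e where e: "e = 1 \<or> e = -1" "w c' = e * pf_del s M {a,b,c'}"
      using wv_at_c[OF skew diag cs] unfolding w_def by blast
    have "W c' = (c * e) * pf_del s M {a,b,c'}" using e by (simp add: W_def mult.assoc)
    moreover have "c * e = 1 \<or> c * e = -1" using pm1_mult[OF c(1) e(1)] .
    ultimately show ?thesis by blast
  qed
  show ?thesis using WV MW Wa Wc unfolding ga_def gb_def by blast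
qed


lemma choice3:
  assumes "\<And>l. l < s \<Longrightarrow> \<exists>x\<in>R. \<exists>y\<in>R. \<exists>z\<in>R. Q l x y z"
  shows "\<exists>X Y Z. \<forall>l<s. X l \<in> R \<and> Y l \<in> R \<and> Z l \<in> R \<and> Q l (X l) (Y l) (Z l)"
proof -
  have "\<forall>l. \<exists>t. l < s \<longrightarrow> fst t \<in> R \<and> fst (snd t) \<in> R \<and> snd (snd t) \<in> R \<and> Q l (fst t) (fst (snd t)) (snd (snd t))"
  proof
    fix l show "\<exists>t. l < s \<longrightarrow> fst t \<in> R \<and> fst (snd t) \<in> R \<and> snd (snd t) \<in> R \<and> Q l (fst t) (fst (snd t)) (snd (snd t))"
    proof (cases "l < s")
      case True
      then obtain x y z where "x \<in> R" "y \<in> R" "z \<in> R" "Q l x y z" using assms by blast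
      then show ?thesis by (intro exI[of _ "(x, y, z)"]) simp
    qed simp
  qed
  from choice[OF this] obtain T where T: "\<forall>l. l < s \<longrightarrow> fst (T l) \<in> R \<and> fst (snd (T l)) \<in> R \<and> snd (snd (T l)) \<in> R \<and> Q l (fst (T l)) (fst (snd (T l))) (snd (snd (T l)))"
    ..
  show ?thesis by (rule exI[of _ "\<lambda>l. fst (T l)"], rule exI[of _ "\<lambda>l. fst (snd (T l))"], rule exI[of _ "\<lambda>l. snd (snd (T l))"]) (rule T)
qed

lemma sum_comb:
  fixes h g f :: "'a::comm_ring_1"
  shows "(\<Sum>m<s. (h * A m - g * B m + f * C m) * z m) = h * (\<Sum>m<s. A m * z m) - g * (\<Sum>m<s. B m * z m) + f * (\<Sum>m<s. C m * z m)"
proof -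
  have "(\<Sum>m<s. (h * A m - g * B m + f * C m) * z m) = (\<Sum>m<s. h * (A m * z m) - g * (B m * z m) + f * (C m * z m))"
    by (rule sum.cong) (simp_all add: algebra_simps)
  also have "\<dots> = (\<Sum>m<s. h * (A m * z m)) - (\<Sum>m<s. g * (B m * z m)) + (\<Sum>m<s. f * (C m * z m))"
    by (simp only: sum.distrib sum_subtractf)
  also have "\<dots> = h * (\<Sum>m<s. A m * z m) - g * (\<Sum>m<s. B m * z m) + f * (\<Sum>m<s. C m * z m)"
    by (simp only: sum_distrib_left)
  finally show ?thesis .
qed

lemma sum_scale:
  "(\<Sum>m<s. (c * A m) * z m) = c * (\<Sum>m<s. A m * (z m :: 'a::comm_ring_1))"
  by (simp add: sum_distrib_left algebra_simps)


theorem lemma6p4: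
  fixes n s :: nat and I :: "'k::field mpoly set" and M :: "nat \<Rightarrow> nat \<Rightarrow> 'k mpoly"
    and i j k :: nat
  assumes "gorenstein_ht3_BE n I s M"
    and "\<not> complete_intersection n I"
    and "i < s" "j < s" "k < s" "i \<noteq> j" "i \<noteq> k" "j \<noteq> k"
    and "regular_seq n [pf_del s M {i}, pf_del s M {j}, pf_del s M {k}]"
  shows "colon n (ideal_gen n {pf_del s M {i}, pf_del s M {j}, pf_del s M {k}}) I
       = ideal_gen n {pf_del s M {i}, pf_del s M {j}, pf_del s M {k}, pf_del s M {i, j, k}}"
proof -
  have ijk: "i < s" "j < s" "k < s" "i \<noteq> j" "i \<noteq> k" "j \<noteq> k" using assms(3-8) by auto
  have BE: "BE_matrix n I s M" using assms(1) by (simp add: gorenstein_ht3_BE_def)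
  note BEc = BE[unfolded BE_matrix_def]
  have sk: "\<forall>a<s. \<forall>b<s. M a b \<in> Rn n \<and> M b a = - M a b \<and> Poly_Mapping.lookup (M a b) 0 = 0"
    using BEc by (elim conjE) assumption
  have diag: "\<forall>a<s. M a a = 0" using BEc by (elim conjE) assumption
  have Idef: "I = {(\<Sum>i<s. pfvec s M i * v i) | v. v \<in> Vn n s}" using BEc by (elim conjE) assumption
  have K2: "{v \<in> Vn n s. (\<forall>i. mat_vec s M v i = 0)} = {(\<lambda>i. r * pfvec s M i) | r. r \<in> Rn n}"
    using BEc by (elim conjE) assumption
  have skew: "\<forall>a<s. \<forall>b<s. M b a = - M a b" using sk by blast
  have MR: "\<forall>a<s. \<forall>b<s. M a b \<in> Rn n" using sk by blast
  have pfdelR: "pf_del s M D \<in> Rn n" for D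
    unfolding pf_del_def by (rule pf_Rn) (use MR in auto)
  have PR: "pfvec s M l \<in> Rn n" for l
    unfolding pfvec_def using pfdelR by simp
  have PV: "pfvec s M \<in> Vn n s" using pfdelR by (simp add: Vn_def pfvec_def)
  have "pfvec s M \<in> {(\<lambda>i. r * pfvec s M i) | r. r \<in> Rn n}"
    by (intro CollectI exI[of _ 1]) simp
  then have MP: "mat_vec s M (pfvec s M) m = 0" for m unfolding K2[symmetric] by blast
  have PM: "\<forall>m<s. (\<Sum>l<s. M l m * pfvec s M l) = 0"
  proof (intro allI impI)
    fix m assume m: "m < s"
    have "(\<Sum>l<s. M l m * pfvec s M l) = (\<Sum>l<s. - (M m l * pfvec s M l))"
    proof (rule sum.cong[OF refl])
      fix l assume "l \<in> {..<s}"
      then have "M l m = - M m l" using skew m by blast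
      then show "M l m * pfvec s M l = - (M m l * pfvec s M l)" by simp
    qed
    also have "\<dots> = - mat_vec s M (pfvec s M) m" using m by (simp add: mat_vec_def sum_negf)
    finally show "(\<Sum>l<s. M l m * pfvec s M l) = 0" using MP by simp
  qed
  define f where "f = pf_del s M {i}"
  define g where "g = pf_del s M {j}"
  define h where "h = pf_del s M {k}"
  define u where "u = pf_del s M {i,j,k}"
  define si where "si = ((-1)^i :: 'k mpoly)"
  define sj where "sj = ((-1)^j :: 'k mpoly)"
  define sk' where "sk' = ((-1)^k :: 'k mpoly)"
  have fR: "f \<in> Rn n" and gR: "g \<in> Rn n" and hR: "h \<in> Rn n" and uR: "u \<in> Rn n"
    using pfdelR by (simp_all add: f_def g_def h_def u_def)
  have Pi: "pfvec s M i = si * f" and Pj: "pfvec s M j = sj * g" and Pk: "pfvec s M k = sk' * h"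
    using ijk by (simp_all add: pfvec_def f_def g_def h_def si_def sj_def sk'_def)
  have sq: "si * si = 1" "sj * sj = 1" "sk' * sk' = 1"
    by (simp_all add: si_def sj_def sk'_def)
  have RS: "regular_seq n [f, g, h]" using assms(9) by (simp add: f_def g_def h_def)
  have Ri: "\<And>q r. q < 3 \<Longrightarrow> r \<in> Rn n \<Longrightarrow> r * [f,g,h] ! q \<in> ideal_gen n (set (take q [f,g,h])) \<Longrightarrow> r \<in> ideal_gen n (set (take q [f,g,h]))"
    using RS unfolding regular_seq_def by auto
  have R1: "\<forall>r\<in>Rn n. r * g \<in> ideal_gen n {f} \<longrightarrow> r \<in> ideal_gen n {f}"
    using Ri[of 1] by simp
  have R2: "\<forall>r\<in>Rn n. r * h \<in> ideal_gen n {f, g} \<longrightarrow> r \<in> ideal_gen n {f, g}"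
    using Ri[of 2] by (simp add: numeral_2_eq_2)
  have fnz: "f \<noteq> 0"
  proof
    assume "f = 0"
    then have "(1::'k mpoly) \<in> ideal_gen n {}" using Ri[of 0 1] by (simp add: ideal_gen_empty)
    then show False by (simp add: ideal_gen_empty)
  qed
  note k1 = koszul1[OF R1 R2 fnz fR gR hR]
  note k2 = koszul2[OF R1 R2 fnz fR gR hR]
  obtain Wij where Wij: "Wij \<in> Vn n s"
    "\<forall>m. mat_vec s M Wij m = (if m = i then si * g else if m = j then - (sj * f) else 0)"
    "Wij i = 0"
    using pair_vec[OF skew diag MR PM ijk(1) ijk(2) ijk(4)] unfolding f_def g_def si_def sj_def by blast
  obtain Wik where Wik: "Wik \<in> Vn n s"
    "\<forall>m. mat_vec s M Wik m = (if m = i then si * h else if m = k then - (sk' * f) else 0)"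
    "Wik i = 0"
    using pair_vec[OF skew diag MR PM ijk(1) ijk(3) ijk(5)] unfolding f_def h_def si_def sk'_def by blast
  obtain Wjk ej where Wjk: "Wjk \<in> Vn n s"
    "\<forall>m. mat_vec s M Wjk m = (if m = j then sj * h else if m = k then - (sk' * g) else 0)"
    "ej = 1 \<or> ej = -1" "Wjk i = ej * u"
  proof -
    obtain W where W: "W \<in> Vn n s"
      "\<forall>m. mat_vec s M W m = (if m = j then sj * h else if m = k then - (sk' * g) else 0)"
      "\<forall>c<s. c \<noteq> j \<longrightarrow> c \<noteq> k \<longrightarrow> (\<exists>\<epsilon>. (\<epsilon> = 1 \<or> \<epsilon> = -1) \<and> W c = \<epsilon> * pf_del s M {j,k,c})"
      using pair_vec[OF skew diag MR PM ijk(2) ijk(3) ijk(6)] unfolding g_def h_def sj_def sk'_def by blast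
    then obtain e where "e = 1 \<or> e = -1" "W i = e * pf_del s M {j,k,i}" using ijk by blast
    moreover have "{j,k,i} = {i,j,k}" by auto
    ultimately show ?thesis using that W unfolding u_def by metis
  qed
  define V where "V = (\<lambda>l. h * Wij l - g * Wik l + f * Wjk l)"
  have VV: "V \<in> Vn n s" using Wij(1) Wik(1) Wjk(1) fR gR hR by (simp add: Vn_def V_def)
  have MV: "mat_vec s M V m = 0" for m
  proof -
    have "mat_vec s M V m = h * mat_vec s M Wij m - g * mat_vec s M Wik m + f * mat_vec s M Wjk m"
      unfolding V_def by (rule mat_vec_lin)
    also have "\<dots> = 0"
      using ijk by (simp only: Wij(2) Wik(2) Wjk(2)) (auto simp: algebra_simps)
    finally show ?thesis .
  qed
  have "V \<in> {(\<lambda>i. r * pfvec s M i) | r. r \<in> Rn n}" unfolding K2[symmetric] using VV MV by blast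
  then obtain a3 where a3: "a3 \<in> Rn n" "V = (\<lambda>l. a3 * pfvec s M l)" by blast
  have v1: "V i = f * (ej * u)" using Wij(3) Wik(3) Wjk(4) by (simp add: V_def)
  have v2: "V i = a3 * (si * f)" using fun_cong[OF a3(2), of i] Pi by simp
  have "a3 * (si * f) = f * (ej * u)" using v1 v2 by metis
  then have "f * (a3 * si - ej * u) = 0" by (simp add: algebra_simps)
  then have "a3 * si = ej * u" using fnz by simp
  note eq = this
  have ejsq: "ej * ej = 1" using pm1_sq[OF Wjk(3)] .
  have "a3 = a3 * (si * si)" using sq by simp
  also have "\<dots> = (a3 * si) * si" by (simp only: mult.assoc)
  also have "\<dots> = (ej * u) * si" by (simp only: eq)
  also have "\<dots> = (ej * si) * u" by (simp only: ac_simps)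
  finally have a3u: "a3 = (ej * si) * u" .
  have "u = u * (ej * ej)" using ejsq by simp
  also have "\<dots> = (ej * u) * ej" by (simp only: ac_simps)
  also have "\<dots> = (a3 * si) * ej" by (simp only: eq)
  also have "\<dots> = (ej * si) * a3" by (simp only: ac_simps)
  finally have ua3: "u = (ej * si) * a3" .
  have eR: "ej * si \<in> Rn n" using Wjk(3) by (auto simp: si_def)
  have VP: "V l = a3 * pfvec s M l" for l using a3(2) by simp
  have sup: "ideal_gen n {f,g,h,u} \<subseteq> colon n (ideal_gen n {f,g,h}) I"
  proof
    fix x assume "x \<in> ideal_gen n {f,g,h,u}"
    then obtain c1 c2 c3 c4 where cs: "c1 \<in> Rn n" "c2 \<in> Rn n" "c3 \<in> Rn n" "c4 \<in> Rn n"
      "x = c1 * f + c2 * g + c3 * h + c4 * u" unfolding mem4 by blast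
    have xR: "x \<in> Rn n" using cs fR gR hR uR by simp
    have "\<forall>a\<in>I. x * a \<in> ideal_gen n {f,g,h}"
    proof
      fix a assume "a \<in> I"
      then obtain v where v: "v \<in> Vn n s" "a = (\<Sum>l<s. pfvec s M l * v l)" using Idef by blast
      have aR: "a \<in> Rn n" using v PR by (auto simp: Vn_def intro!: Rn_sum Rn_mult)
      define S1 where "S1 = (\<Sum>l<s. Wij l * v l)"
      define S2 where "S2 = (\<Sum>l<s. Wik l * v l)"
      define S3 where "S3 = (\<Sum>l<s. Wjk l * v l)"
      have SR: "S1 \<in> Rn n" "S2 \<in> Rn n" "S3 \<in> Rn n"
        using v(1) Wij(1) Wik(1) Wjk(1) unfolding S1_def S2_def S3_def
        by (auto simp: Vn_def intro!: Rn_sum Rn_mult)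
      have "a3 * a = (\<Sum>l<s. (a3 * pfvec s M l) * v l)" unfolding v(2) by (rule sum_scale[symmetric])
      also have "\<dots> = (\<Sum>l<s. V l * v l)" by (simp only: VP)
      also have "\<dots> = h * S1 - g * S2 + f * S3" unfolding V_def S1_def S2_def S3_def by (rule sum_comb)
      finally have a3a: "a3 * a = h * S1 - g * S2 + f * S3" .
      have "x * a = (c1 * a + c4 * (ej * si) * S3) * f + (c2 * a - c4 * (ej * si) * S2) * g + (c3 * a + c4 * (ej * si) * S1) * h"
        using cs(5) ua3 a3a by algebra
      then show "x * a \<in> ideal_gen n {f,g,h}"
        unfolding mem3 using cs aR SR eR
        by (intro bexI[of _ "c1 * a + c4 * (ej * si) * S3"] bexI[of _ "c2 * a - c4 * (ej * si) * S2"]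
              bexI[of _ "c3 * a + c4 * (ej * si) * S1"]) simp_all
    qed
    then show "x \<in> colon n (ideal_gen n {f,g,h}) I" unfolding colon_def using xR by blast
  qed
  have sub: "colon n (ideal_gen n {f,g,h}) I \<subseteq> ideal_gen n {f,g,h,u}"
  proof
    fix r assume "r \<in> colon n (ideal_gen n {f,g,h}) I"
    then have rR: "r \<in> Rn n" and rI: "\<forall>a\<in>I. r * a \<in> ideal_gen n {f,g,h}" unfolding colon_def by simp_all
    have PI: "pfvec s M l \<in> I" if "l < s" for l
    proof -
      define e where "e = (\<lambda>m. if m = l then (1::'k mpoly) else 0)"
      have eV: "e \<in> Vn n s" using that by (auto simp: Vn_def e_def)
      have "(\<Sum>m<s. pfvec s M m * e m) = (\<Sum>m<s. if m = l then pfvec s M l else 0)"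
        by (rule sum.cong) (auto simp: e_def)
      also have "\<dots> = pfvec s M l" by (subst sum.delta) (use that in auto)
      finally have eq: "pfvec s M l = (\<Sum>m<s. pfvec s M m * e m)" by simp
      show ?thesis unfolding Idef by (rule CollectI, rule exI[of _ e]) (simp only: eq eV simp_thms)
    qed
    have bex1: "\<exists>x\<in>Rn n. \<exists>y\<in>Rn n. \<exists>z\<in>Rn n. r * pfvec s M l = x * f + y * g + z * h" if "l < s" for l
      using bspec[OF rI PI[OF that]] unfolding mem3 .
    have "\<exists>X Y Z. \<forall>l<s. X l \<in> Rn n \<and> Y l \<in> Rn n \<and> Z l \<in> Rn n
        \<and> r * pfvec s M l = X l * f + Y l * g + Z l * h" by (rule choice3[OF bex1])
    then obtain b1 where "\<exists>Y Z. \<forall>l<s. b1 l \<in> Rn n \<and> Y l \<in> Rn n \<and> Z l \<in> Rn n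
        \<and> r * pfvec s M l = b1 l * f + Y l * g + Z l * h" ..
    then obtain b2 where "\<exists>Z. \<forall>l<s. b1 l \<in> Rn n \<and> b2 l \<in> Rn n \<and> Z l \<in> Rn n
        \<and> r * pfvec s M l = b1 l * f + b2 l * g + Z l * h" ..
    then obtain b3 where B: "\<forall>l<s. b1 l \<in> Rn n \<and> b2 l \<in> Rn n \<and> b3 l \<in> Rn n
        \<and> r * pfvec s M l = b1 l * f + b2 l * g + b3 l * h" ..
    have bex2: "\<exists>x\<in>Rn n. \<exists>y\<in>Rn n. \<exists>z\<in>Rn n. (\<Sum>l<s. M l m * b1 l) = x * g + y * h
        \<and> (\<Sum>l<s. M l m * b2 l) = - x * f + z * h \<and> (\<Sum>l<s. M l m * b3 l) = - y * f - z * g" if m: "m < s" for m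
    proof (rule k1)
      have "(\<Sum>l<s. M l m * b1 l) * f + (\<Sum>l<s. M l m * b2 l) * g + (\<Sum>l<s. M l m * b3 l) * h
          = (\<Sum>l<s. M l m * b1 l * f + M l m * b2 l * g + M l m * b3 l * h)"
        by (simp only: sum_distrib_right sum.distrib)
      also have "\<dots> = (\<Sum>l<s. M l m * (b1 l * f + b2 l * g + b3 l * h))"
        by (rule sum.cong) (simp_all add: algebra_simps)
      also have "\<dots> = (\<Sum>l<s. r * (M l m * pfvec s M l))"
      proof (rule sum.cong[OF refl])
        fix l assume "l \<in> {..<s}"
        then have "r * pfvec s M l = b1 l * f + b2 l * g + b3 l * h" using B by blast
        then show "M l m * (b1 l * f + b2 l * g + b3 l * h) = r * (M l m * pfvec s M l)"
          by (simp add: ac_simps)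
      qed
      also have "\<dots> = r * (\<Sum>l<s. M l m * pfvec s M l)" by (simp only: sum_distrib_left)
      also have "\<dots> = 0" using PM m by simp
      finally show "(\<Sum>l<s. M l m * b1 l) * f + (\<Sum>l<s. M l m * b2 l) * g + (\<Sum>l<s. M l m * b3 l) * h = 0" .
      show "(\<Sum>l<s. M l m * b1 l) \<in> Rn n" "(\<Sum>l<s. M l m * b2 l) \<in> Rn n" "(\<Sum>l<s. M l m * b3 l) \<in> Rn n"
        using B MR m by (auto intro!: Rn_sum Rn_mult)
    qed
    have "\<exists>X Y Z. \<forall>m<s. X m \<in> Rn n \<and> Y m \<in> Rn n \<and> Z m \<in> Rn n
        \<and> ((\<Sum>l<s. M l m * b1 l) = X m * g + Y m * h
        \<and> (\<Sum>l<s. M l m * b2 l) = - X m * f + Z m * h \<and> (\<Sum>l<s. M l m * b3 l) = - Y m * f - Z m * g)"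
      by (rule choice3[OF bex2])
    then obtain x where "\<exists>Y Z. \<forall>m<s. x m \<in> Rn n \<and> Y m \<in> Rn n \<and> Z m \<in> Rn n
        \<and> ((\<Sum>l<s. M l m * b1 l) = x m * g + Y m * h
        \<and> (\<Sum>l<s. M l m * b2 l) = - x m * f + Z m * h \<and> (\<Sum>l<s. M l m * b3 l) = - Y m * f - Z m * g)" ..
    then obtain y where "\<exists>Z. \<forall>m<s. x m \<in> Rn n \<and> y m \<in> Rn n \<and> Z m \<in> Rn n
        \<and> ((\<Sum>l<s. M l m * b1 l) = x m * g + y m * h
        \<and> (\<Sum>l<s. M l m * b2 l) = - x m * f + Z m * h \<and> (\<Sum>l<s. M l m * b3 l) = - y m * f - Z m * g)" ..
    then obtain z where XYZ: "\<forall>m<s. x m \<in> Rn n \<and> y m \<in> Rn n \<and> z m \<in> Rn n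
        \<and> ((\<Sum>l<s. M l m * b1 l) = x m * g + y m * h
        \<and> (\<Sum>l<s. M l m * b2 l) = - x m * f + z m * h \<and> (\<Sum>l<s. M l m * b3 l) = - y m * f - z m * g)" ..
    define BX where "BX = (\<lambda>v. \<Sum>m<s. v m * x m)"
    define BY where "BY = (\<lambda>v. \<Sum>m<s. v m * y m)"
    define BZ where "BZ = (\<lambda>v. \<Sum>m<s. v m * z m)"
    have BR: "BX v \<in> Rn n" "BY v \<in> Rn n" "BZ v \<in> Rn n" if "v \<in> Vn n s" for v
      using that XYZ unfolding BX_def BY_def BZ_def by (auto simp: Vn_def intro!: Rn_sum Rn_mult)
    have lin1: "BX v * g + BY v * h = (\<Sum>l<s. mat_vec s M v l * b1 l)" for v
    proof -
      have "BX v * g + BY v * h = (\<Sum>m<s. v m * x m * g + v m * y m * h)"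
        unfolding BX_def BY_def by (simp only: sum_distrib_right sum.distrib)
      also have "\<dots> = (\<Sum>m<s. v m * (x m * g + y m * h))"
        by (rule sum.cong) (simp_all add: algebra_simps)
      also have "\<dots> = (\<Sum>m<s. v m * (\<Sum>l<s. M l m * b1 l))"
        by (rule sum.cong[OF refl]) (use XYZ in simp)
      also have "\<dots> = (\<Sum>l<s. mat_vec s M v l * b1 l)" by (rule sum_mat_vec)
      finally show ?thesis .
    qed
    have lin2: "- BX v * f + BZ v * h = (\<Sum>l<s. mat_vec s M v l * b2 l)" for v
    proof -
      have "- BX v * f + BZ v * h = BX v * (- f) + BZ v * h" by simp
      also have "\<dots> = (\<Sum>m<s. v m * x m * (- f) + v m * z m * h)"
        unfolding BX_def BZ_def by (simp only: sum_distrib_right sum.distrib)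
      also have "\<dots> = (\<Sum>m<s. v m * (- x m * f + z m * h))"
        by (rule sum.cong) (simp_all add: algebra_simps)
      also have "\<dots> = (\<Sum>m<s. v m * (\<Sum>l<s. M l m * b2 l))"
        by (rule sum.cong[OF refl]) (use XYZ in simp)
      also have "\<dots> = (\<Sum>l<s. mat_vec s M v l * b2 l)" by (rule sum_mat_vec)
      finally show ?thesis .
    qed
    have lin3: "- BY v * f - BZ v * g = (\<Sum>l<s. mat_vec s M v l * b3 l)" for v
    proof -
      have "- BY v * f - BZ v * g = BY v * (- f) + BZ v * (- g)" by simp
      also have "\<dots> = (\<Sum>m<s. v m * y m * (- f) + v m * z m * (- g))"
        unfolding BY_def BZ_def by (simp only: sum_distrib_right sum.distrib)
      also have "\<dots> = (\<Sum>m<s. v m * (- y m * f - z m * g))"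
        by (rule sum.cong) (simp_all add: algebra_simps)
      also have "\<dots> = (\<Sum>m<s. v m * (\<Sum>l<s. M l m * b3 l))"
        by (rule sum.cong[OF refl]) (use XYZ in simp)
      also have "\<dots> = (\<Sum>l<s. mat_vec s M v l * b3 l)" by (rule sum_mat_vec)
      finally show ?thesis .
    qed
    have "- BX (pfvec s M) * f + BZ (pfvec s M) * h = 0" using lin2[of "pfvec s M"] MP by simp
    moreover have "- BY (pfvec s M) * f - BZ (pfvec s M) * g = 0" using lin3[of "pfvec s M"] MP by simp
    ultimately obtain t where t: "t \<in> Rn n" "BZ (pfvec s M) = t * f"
      using k2[OF BR[OF PV]] by blast
    have tp: "(\<Sum>l<s. mat_vec s M W l * bb l) = X * bb a + Y * bb b"
      if "\<forall>m. mat_vec s M W m = (if m = a then X else if m = b then Y else 0)" "a < s" "b < s" "a \<noteq> b"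
      for W X Y a b and bb :: "nat \<Rightarrow> 'k mpoly"
      using sum_two_points[OF that(2-4), of X Y bb] that(1) by simp
    have Bi: "b1 i \<in> Rn n" "b2 i \<in> Rn n" "b3 i \<in> Rn n" "r * pfvec s M i = b1 i * f + b2 i * g + b3 i * h"
      using B ijk by blast+
    have Bj: "b1 j \<in> Rn n" "b2 j \<in> Rn n" "b3 j \<in> Rn n" "r * pfvec s M j = b1 j * f + b2 j * g + b3 j * h"
      using B ijk by blast+
    have Bk: "b1 k \<in> Rn n" "b2 k \<in> Rn n" "b3 k \<in> Rn n" "r * pfvec s M k = b1 k * f + b2 k * g + b3 k * h"
      using B ijk by blast+
    have siR: "si \<in> Rn n" "sj \<in> Rn n" "sk' \<in> Rn n" by (simp_all add: si_def sj_def sk'_def)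
    have "(si * b1 i - r) * f + (si * b2 i) * g + (si * b3 i) * h = 0"
      using Bi(4) Pi sq(1) by algebra
    then obtain X1 Y1 Z1 where H1: "X1 \<in> Rn n" "Y1 \<in> Rn n" "Z1 \<in> Rn n" "si * b1 i - r = X1 * g + Y1 * h"
        "si * b2 i = - X1 * f + Z1 * h" "si * b3 i = - Y1 * f - Z1 * g"
      using k1[of "si * b1 i - r" "si * b2 i" "si * b3 i"] Bi siR rR by auto
    have "(sj * b1 j) * f + (sj * b2 j - r) * g + (sj * b3 j) * h = 0"
      using Bj(4) Pj sq(2) by algebra
    then obtain X2 Y2 Z2 where H2: "X2 \<in> Rn n" "Y2 \<in> Rn n" "Z2 \<in> Rn n" "sj * b1 j = X2 * g + Y2 * h"
        "sj * b2 j - r = - X2 * f + Z2 * h" "sj * b3 j = - Y2 * f - Z2 * g"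
      using k1[of "sj * b1 j" "sj * b2 j - r" "sj * b3 j"] Bj siR rR by auto
    have "(sk' * b1 k) * f + (sk' * b2 k) * g + (sk' * b3 k - r) * h = 0"
      using Bk(4) Pk sq(3) by algebra
    then obtain X3 Y3 Z3 where H3: "X3 \<in> Rn n" "Y3 \<in> Rn n" "Z3 \<in> Rn n" "sk' * b1 k = X3 * g + Y3 * h"
        "sk' * b2 k = - X3 * f + Z3 * h" "sk' * b3 k - r = - Y3 * f - Z3 * g"
      using k1[of "sk' * b1 k" "sk' * b2 k" "sk' * b3 k - r"] Bk siR rR by auto
    have L12: "- BX Wij * f + BZ Wij * h = si * g * b2 i + - (sj * f) * b2 j"
              "- BY Wij * f - BZ Wij * g = si * g * b3 i + - (sj * f) * b3 j"
      using lin2[of Wij] lin3[of Wij] tp[OF Wij(2) ijk(1) ijk(2) ijk(4)] by simp_all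
    have L13: "- BX Wik * f + BZ Wik * h = si * h * b2 i + - (sk' * f) * b2 k"
              "- BY Wik * f - BZ Wik * g = si * h * b3 i + - (sk' * f) * b3 k"
      using lin2[of Wik] lin3[of Wik] tp[OF Wik(2) ijk(1) ijk(3) ijk(5)] by simp_all
    have L23: "- BX Wjk * f + BZ Wjk * h = sj * h * b2 j + - (sk' * g) * b2 k"
              "- BY Wjk * f - BZ Wjk * g = sj * h * b3 j + - (sk' * g) * b3 k"
      using lin2[of Wjk] lin3[of Wjk] tp[OF Wjk(2) ijk(2) ijk(3) ijk(6)] by simp_all
    have "- (BX Wij - r - g * X1 + f * X2) * f + (BZ Wij - g * Z1 + f * Z2) * h = 0"
      using L12(1) H1(5) H2(5) by algebra
    moreover have "- (BY Wij - g * Y1 + f * Y2) * f - (BZ Wij - g * Z1 + f * Z2) * g = 0"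
      using L12(2) H1(6) H2(6) by algebra
    ultimately obtain t12 where t12: "t12 \<in> Rn n" "BZ Wij - g * Z1 + f * Z2 = t12 * f"
      using k2[of "BX Wij - r - g * X1 + f * X2" "BY Wij - g * Y1 + f * Y2" "BZ Wij - g * Z1 + f * Z2"]
        BR[OF Wij(1)] H1 H2 rR fR gR by auto
    have "- (BX Wik - h * X1 + f * X3) * f + (BZ Wik - h * Z1 + f * Z3) * h = 0"
      using L13(1) H1(5) H3(5) by algebra
    moreover have "- (BY Wik - r - h * Y1 + f * Y3) * f - (BZ Wik - h * Z1 + f * Z3) * g = 0"
      using L13(2) H1(6) H3(6) by algebra
    ultimately obtain t13 where t13: "t13 \<in> Rn n" "BZ Wik - h * Z1 + f * Z3 = t13 * f"
      using k2[of "BX Wik - h * X1 + f * X3" "BY Wik - r - h * Y1 + f * Y3" "BZ Wik - h * Z1 + f * Z3"]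
        BR[OF Wik(1)] H1 H3 rR fR hR by auto
    have "- (BX Wjk - h * X2 + g * X3) * f + (BZ Wjk - r - h * Z2 + g * Z3) * h = 0"
      using L23(1) H2(5) H3(5) by algebra
    moreover have "- (BY Wjk - h * Y2 + g * Y3) * f - (BZ Wjk - r - h * Z2 + g * Z3) * g = 0"
      using L23(2) H2(6) H3(6) by algebra
    ultimately obtain t23 where t23: "t23 \<in> Rn n" "BZ Wjk - r - h * Z2 + g * Z3 = t23 * f"
      using k2[of "BX Wjk - h * X2 + g * X3" "BY Wjk - h * Y2 + g * Y3" "BZ Wjk - r - h * Z2 + g * Z3"]
        BR[OF Wjk(1)] H2 H3 rR gR hR by auto
    have "BZ V = h * BZ Wij - g * BZ Wik + f * BZ Wjk" unfolding BZ_def V_def by (rule sum_comb)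
    moreover have "BZ V = a3 * BZ (pfvec s M)" unfolding BZ_def by (simp only: VP sum_scale)
    ultimately have bzv: "h * BZ Wij - g * BZ Wik + f * BZ Wjk = a3 * (t * f)" using t(2) by simp
    have "(a3 * t - r - h * t12 + g * t13 - f * t23) * f = 0"
      using bzv t12(2) t13(2) t23(2) by algebra
    then have "r = (- t23) * f + t13 * g + (- t12) * h + (t * (ej * si)) * u"
      using fnz a3u by algebra
    then show "r \<in> ideal_gen n {f,g,h,u}"
      unfolding mem4 using t12 t13 t23 t eR
      by (intro bexI[of _ "- t23"] bexI[of _ "t13"] bexI[of _ "- t12"] bexI[of _ "t * (ej * si)"]) simp_all
  qed
  show ?thesis using sub sup unfolding f_def g_def h_def u_def by blast
qed

end
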